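(* Let $a,b,c>0$ and consider the Van der Pol system $\dot v_1=av_2$, $\dot v_2=-bv_1+c(1-v_1^2)v_2$, written as $\dot v=\phi(v)\omega$ with $\omega=\mathrm{col}(a,b,c)$ and $$\phi(v)=\begin{bmatrix}v_2&0&0\\0&-v_1&(1-v_1^2)v_2\end{bmatrix}.$$ Then for every initial condition $v(0)\ne0$, the function $t\mapsto\phi^T(v(t))\in\mathbb{R}^{3\times2}$ is persistently exciting.
   Context: Persistent excitation: a bounded piecewise continuous $f:[0,\infty)\to\mathbb{R}^{n\times m}$ is persistently exciting if there exist $\epsilon,t_0,T_0>0$ with $\frac1{T_0}\int_t^{t+T_0}f(s)f^T(s)\,ds\ge\epsilon I_n$ for all $t\ge t_0$. *)

theory Defs
  imports "HOL-Analysis.Analysis"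
begin

definition piecewise_continuous :: "(real \<Rightarrow> 'a::real_normed_vector) \<Rightarrow> bool" where
  "piecewise_continuous f \<longleftrightarrow>
     (\<forall>T\<ge>0. \<exists>S. finite S \<and> continuous_on ({0..T} - S) f \<and>
        (\<forall>s\<in>S. (s > 0 \<longrightarrow> (\<exists>l. (f \<longlongrightarrow> l) (at_left s))) \<and> (\<exists>l. (f \<longlongrightarrow> l) (at_right s))))"

definition persistently_exciting :: "(real \<Rightarrow> real^'m^'n) \<Rightarrow> bool" where
  "persistently_exciting f \<longleftrightarrow>
     bounded (f ` {0..}) \<and> piecewise_continuous f \<and>
     (\<exists>\<epsilon> t0 T0. \<epsilon> > 0 \<and> t0 > 0 \<and> T0 > 0 \<and>
        (\<forall>t\<ge>t0. \<forall>x::real^'n.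
           x \<bullet> (((1 / T0) *\<^sub>R integral {t..t+T0} (\<lambda>s. f s ** transpose (f s)) - \<epsilon> *\<^sub>R mat 1) *v x) \<ge> 0))"

definition vdp_phi :: "real \<Rightarrow> real \<Rightarrow> real^3^2" where
  "vdp_phi v1 v2 = vector [vector [v2, 0, 0], vector [0, - v1, (1 - v1\<^sup>2) * v2]]"

end

theory Submission
  imports Defs
begin


lemma mvt0:
  fixes g g' :: "real \<Rightarrow> real"
  assumes d: "\<And>t. t \<ge> 0 \<Longrightarrow> (g has_real_derivative g' t) (at t within {0..})"
    and "0 \<le> x" "x < y"
  shows "\<exists>\<xi>. x < \<xi> \<and> \<xi> < y \<and> g y - g x = g' \<xi> * (y - x)"
proof -
  have "\<exists>\<xi>\<in>{x<..<y}. g y - g x = (\<lambda>h. g' \<xi> * h) (y - x)"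
  proof (rule mvt_simple[OF \<open>x<y\<close>])
    fix z assume "x \<le> z" "z \<le> y"
    then have "(g has_real_derivative g' z) (at z within {x..y})"
      using has_field_derivative_subset[OF d] \<open>0 \<le> x\<close> by auto
    then show "(g has_derivative (\<lambda>h. g' z * h)) (at z within {x..y})"
      by (simp add: has_field_derivative_def)
  qed
  then show ?thesis by auto
qed

lemma lip0:
  fixes g g' :: "real \<Rightarrow> real"
  assumes d: "\<And>t. t \<ge> 0 \<Longrightarrow> (g has_real_derivative g' t) (at t within {0..})"
    and bd: "\<And>t. t \<ge> 0 \<Longrightarrow> \<bar>g' t\<bar> \<le> L"
    and "0 \<le> x" "x \<le> y"
  shows "\<bar>g y - g x\<bar> \<le> L * (y - x)"
proof (cases "x = y")
  case True then show ?thesis by simp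
next
  case False
  then obtain \<xi> where "x < \<xi>" "\<xi> < y" "g y - g x = g' \<xi> * (y - x)"
    using mvt0[OF d \<open>0 \<le> x\<close>] \<open>x \<le> y\<close> by force
  moreover have "\<bar>g' \<xi>\<bar> \<le> L" using bd \<open>0 \<le> x\<close> \<open>x < \<xi>\<close> by auto
  ultimately show ?thesis using \<open>x \<le> y\<close>
    by (simp add: abs_mult mult_right_mono)
qed

lemma cont0:
  fixes g g' :: "real \<Rightarrow> real"
  assumes d: "\<And>t. t \<ge> 0 \<Longrightarrow> (g has_real_derivative g' t) (at t within {0..})"
  shows "continuous_on {0..} g"
  by (rule DERIV_continuous_on[where D=g']) (use d in auto)

lemma barrier:
  fixes g g' :: "real \<Rightarrow> real"
  assumes d: "\<And>t. t \<ge> 0 \<Longrightarrow> (g has_real_derivative g' t) (at t within {0..})"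
    and g0: "g 0 \<le> L"
    and neg: "\<And>t. t \<ge> 0 \<Longrightarrow> g t > L \<Longrightarrow> g' t \<le> 0"
    and t: "t \<ge> 0"
  shows "g t \<le> L"
proof (rule ccontr)
  assume "\<not> g t \<le> L"
  then have gt: "g t > L" by simp
  define S where "S = {0..t} \<inter> g -` {..L}"
  have cont: "continuous_on {0..t} g"
    using continuous_on_subset[OF cont0[OF d]] by auto
  have cl: "closed S" unfolding S_def
    by (rule continuous_closed_preimage[OF cont]) auto
  have "0 \<in> S" using g0 t by (auto simp: S_def)
  have bdd: "bdd_above S" unfolding S_def by (auto intro: bdd_aboveI[where M=t])
  define t0 where "t0 = Sup S"
  have t0S: "t0 \<in> S" unfolding t0_def
    using closed_contains_Sup[OF _ bdd cl] \<open>0 \<in> S\<close> by auto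
  then have "0 \<le> t0" "t0 \<le> t" "g t0 \<le> L" by (auto simp: S_def)
  with gt have "t0 < t" by (cases "t0 = t") auto
  then obtain \<xi> where \<xi>: "t0 < \<xi>" "\<xi> < t" "g t - g t0 = g' \<xi> * (t - t0)"
    using mvt0[OF d \<open>0 \<le> t0\<close>] by blast
  have "\<xi> \<notin> S"
  proof
    assume "\<xi> \<in> S"
    then have "\<xi> \<le> t0" unfolding t0_def using bdd by (rule cSup_upper)
    with \<xi> show False by simp
  qed
  then have "g \<xi> > L" using \<xi> \<open>0 \<le> t0\<close> by (auto simp: S_def)
  then have "g' \<xi> \<le> 0" using neg \<xi> \<open>0 \<le> t0\<close> by auto
  then have "g' \<xi> * (t - t0) \<le> 0" using \<open>t0 < t\<close> by (simp add: mult_nonpos_nonneg)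
  with \<xi> \<open>g t0 \<le> L\<close> gt show False by linarith
qed

lemma window:
  fixes g :: "real \<Rightarrow> real"
  assumes cont: "continuous_on {0..} g"
    and lip: "\<And>x y. 0 \<le> x \<Longrightarrow> x \<le> y \<Longrightarrow> \<bar>g y - g x\<bar> \<le> L * (y - x)"
    and L: "L > 0" and eta: "\<eta> > 0" and s: "s \<ge> 0"
    and s0: "s \<le> s0" "s0 \<le> s + h" and gs0: "\<bar>g s0\<bar> \<ge> \<eta>"
  shows "integral {s..s+h+1} (\<lambda>\<tau>. (g \<tau>)\<^sup>2) \<ge> min 1 (\<eta>/(2*L)) * \<eta>\<^sup>2/4"
proof -
  define r where "r = min 1 (\<eta>/(2*L))"
  have r0: "r > 0" "r \<le> 1" "L * r \<le> \<eta>/2" using L eta by (auto simp: r_def min_def field_simps)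
  have cont2: "continuous_on {0..} (\<lambda>\<tau>. (g \<tau>)\<^sup>2)" by (intro continuous_intros cont)
  have int1: "(\<lambda>\<tau>. (g \<tau>)\<^sup>2) integrable_on {s0..s0+r}"
    by (rule integrable_continuous_interval, rule continuous_on_subset[OF cont2]) (use s s0 in auto)
  have int2: "(\<lambda>\<tau>. (g \<tau>)\<^sup>2) integrable_on {s..s+h+1}"
    by (rule integrable_continuous_interval, rule continuous_on_subset[OF cont2]) (use s in auto)
  have pt: "(g \<tau>)\<^sup>2 \<ge> \<eta>\<^sup>2/4" if "\<tau> \<in> {s0..s0+r}" for \<tau>
  proof -
    have "\<bar>g \<tau> - g s0\<bar> \<le> L * (\<tau> - s0)" using lip[of s0 \<tau>] that s s0 by auto
    also have "\<dots> \<le> L * r" using that L by (auto intro: mult_left_mono)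
    finally have "\<bar>g \<tau>\<bar> \<ge> \<eta>/2" using r0 gs0 by linarith
    then have "(\<eta>/2)\<^sup>2 \<le> (g \<tau>)\<^sup>2" using eta
      by (metis abs_le_square_iff abs_of_pos half_gt_zero)
    then show ?thesis by (simp add: power_divide)
  qed
  have "r * \<eta>\<^sup>2/4 = integral {s0..s0+r} (\<lambda>_. \<eta>\<^sup>2/4)" using r0 by simp
  also have "\<dots> \<le> integral {s0..s0+r} (\<lambda>\<tau>. (g \<tau>)\<^sup>2)"
    by (rule integral_le) (use int1 pt in auto)
  also have "\<dots> \<le> integral {s..s+h+1} (\<lambda>\<tau>. (g \<tau>)\<^sup>2)"
    by (rule integral_subset_le) (use int1 int2 s0 r0 in auto)
  finally show ?thesis by (simp add: r_def)
qed

lemma windows: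
  fixes G :: "real \<Rightarrow> real"
  assumes cont: "continuous_on {0..} G"
    and w: "\<And>s. s \<ge> 0 \<Longrightarrow> integral {s..s+H} G \<ge> \<kappa>"
    and H: "H > 0" and t: "t \<ge> 0"
  shows "integral {t..t + real N * H} G \<ge> real N * \<kappa>"
proof (induction N)
  case 0 then show ?case by simp
next
  case (Suc N)
  have int: "G integrable_on {t..t + real (Suc N) * H}"
    by (rule integrable_continuous_interval, rule continuous_on_subset[OF cont]) (use t in auto)
  have "integral {t..t + real N * H} G + integral {t + real N * H..t + real (Suc N) * H} G
        = integral {t..t + real (Suc N) * H} G"
    using Henstock_Kurzweil_Integration.integral_combine[where a=t and c="t + real N * H" and b="t + real (Suc N) * H" and f=G] H int t by (auto simp: algebra_simps)
  moreover have "integral {t + real N * H..t + real (Suc N) * H} G \<ge> \<kappa>"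
    using w[of "t + real N * H"] t H by (simp add: algebra_simps)
  ultimately show ?case using Suc by (simp add: algebra_simps)
qed


lemma vdp_phi_nth:
  "vdp_phi p q $ i $ j = (if i = 1 then (if j = 1 then q else 0)
     else if j = 1 then 0 else if j = 2 then - p else (1 - p\<^sup>2) * q)"
proof -
  have i: "i = 1 \<or> i = 2" by (rule exhaust_2)
  have j: "j = 1 \<or> j = 2 \<or> j = 3" by (rule exhaust_3)
  show ?thesis using i j by (auto simp: vdp_phi_def)
qed

lemma vdp_quad:
  fixes x :: "real^3"
  shows "x \<bullet> ((transpose (vdp_phi p q) ** transpose (transpose (vdp_phi p q))) *v x)
     = (q * x$1)\<^sup>2 + ((1 - p\<^sup>2) * q * x$3 - p * x$2)\<^sup>2"
proof -
  let ?P = "vdp_phi p q"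
  have "x \<bullet> ((transpose ?P ** ?P) *v x) = x \<bullet> (transpose ?P *v (?P *v x))"
    by (simp add: matrix_vector_mul_assoc)
  also have "\<dots> = (x v* transpose ?P) \<bullet> (?P *v x)" by (rule dot_lmul_matrix[symmetric])
  also have "\<dots> = (?P *v x) \<bullet> (?P *v x)" by (simp only: vector_transpose_matrix)
  also have "\<dots> = (q * x$1)\<^sup>2 + ((1 - p\<^sup>2) * q * x$3 - p * x$2)\<^sup>2"
    by (simp add: inner_vec_def sum_2 sum_3 matrix_vector_mult_def vdp_phi_nth power2_eq_square algebra_simps)
  finally show ?thesis by simp
qed

lemma vdp_cont:
  assumes "continuous_on S v1" "continuous_on S v2"
  shows "continuous_on S (\<lambda>s. transpose (vdp_phi (v1 s) (v2 s)) ** transpose (transpose (vdp_phi (v1 s) (v2 s))))"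
proof -
  have e: "continuous_on S (\<lambda>s. vdp_phi (v1 s) (v2 s) $ k $ i)" for k i
    unfolding vdp_phi_nth by (cases "k = 1"; cases "i = 1"; cases "i = 2") (auto intro!: continuous_intros assms)
  show ?thesis
    unfolding transpose_transpose matrix_matrix_mult_def transpose_def
    by (simp, intro continuous_on_vec_lambda continuous_on_sum continuous_on_mult e)
qed

lemma vdp_cont1:
  assumes "continuous_on S v1" "continuous_on S v2"
  shows "continuous_on S (\<lambda>s. transpose (vdp_phi (v1 s) (v2 s)))"
proof -
  have e: "continuous_on S (\<lambda>s. vdp_phi (v1 s) (v2 s) $ k $ i)" for k i
    unfolding vdp_phi_nth by (cases "k = 1"; cases "i = 1"; cases "i = 2") (auto intro!: continuous_intros assms)
  show ?thesis
    unfolding transpose_def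
    by (intro continuous_on_vec_lambda e)
qed

lemma vdp_norm:
  "norm (transpose (vdp_phi p q)) \<le> 6 * (\<bar>p\<bar> + \<bar>q\<bar> + \<bar>(1 - p\<^sup>2) * q\<bar>)"
proof -
  let ?A = "transpose (vdp_phi p q)"
  let ?M = "\<bar>p\<bar> + \<bar>q\<bar> + \<bar>(1 - p\<^sup>2) * q\<bar>"
  have ent: "\<bar>?A $ i $ j\<bar> \<le> ?M" for i j
    by (simp add: transpose_def vdp_phi_nth)
  have row: "norm (?A $ i) \<le> 2 * ?M" for i
  proof -
    have "norm (?A $ i) \<le> (\<Sum>j\<in>UNIV. \<bar>?A $ i $ j\<bar>)" by (rule norm_le_l1_cart)
    also have "\<dots> \<le> 2 * ?M" using ent[of i 1] ent[of i 2] by (simp add: sum_2)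
    finally show ?thesis .
  qed
  have "norm ?A \<le> (\<Sum>i\<in>UNIV. norm (?A $ i))"
    unfolding norm_vec_def by (rule L2_set_le_sum) simp
  also have "\<dots> \<le> 6 * ?M" using row[of 1] row[of 2] row[of 3] by (simp add: sum_3)
  finally show ?thesis .
qed


lemma yarctan: "(y::real) * arctan y \<ge> 3/4 * \<bar>y\<bar> - 1"
proof -
  have pos: "z * arctan z \<ge> 3/4 * z - 1" if "z \<ge> 0" for z :: real
  proof (cases "z \<ge> 1")
    case True
    then have "arctan z \<ge> pi/4" using arctan_monotone'[of 1 z] arctan_one by simp
    then have "arctan z \<ge> 3/4" using pi_gt3 by linarith
    then have "z * arctan z \<ge> z * (3/4)" using that by (intro mult_left_mono) auto
    then show ?thesis by linarith
  next
    case False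
    have "arctan z \<ge> 0" using that arctan_monotone'[of 0 z] by simp
    then have "z * arctan z \<ge> 0" using that by simp
    then show ?thesis using False by linarith
  qed
  show ?thesis
  proof (cases "y \<ge> 0")
    case True then show ?thesis using pos[of y] by simp
  next
    case False
    then have "(-y) * arctan (-y) \<ge> 3/4 * (-y) - 1" using pos[of "-y"] by simp
    then show ?thesis using False by (simp add: arctan_minus)
  qed
qed

lemma Wder_bound:
  fixes k c x y :: real
  assumes k: "k > 0" and c: "c > 0"
  shows "y * (-k*x) + k*x*(y + c*(x - x^3/3)) - ((y + c*(x - x^3/3)) * arctan y + x * ((-k*x)/(1+y\<^sup>2)))
    \<le> k*c*\<bar>x\<bar>^2 - k*c*\<bar>x\<bar>^4/3 + 2*c*\<bar>x\<bar>^3/3 + 2*c*\<bar>x\<bar> + k*\<bar>x\<bar>^2 + 1 - 3/4*\<bar>y\<bar>"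
proof -
  have e: "y * (-k*x) + k*x*(y + c*(x - x^3/3)) - ((y + c*(x - x^3/3)) * arctan y + x * ((-k*x)/(1+y\<^sup>2)))
     = k*c*x^2 - k*c*x^4/3 - y * arctan y - c*(x - x^3/3) * arctan y + k*x^2/(1+y\<^sup>2)"
  proof -
    have "x * ((-k*x)/(1+y\<^sup>2)) = - (k*x^2/(1+y\<^sup>2))" by (simp add: power2_eq_square)
    moreover have "y * (-k*x) + k*x*(y + c*(x - x^3/3)) = k*c*x^2 - k*c*x^4/3"
      by (simp add: algebra_simps power2_eq_square power3_eq_cube power4_eq_xxxx)
    moreover have "(y + c*(x - x^3/3)) * arctan y = y * arctan y + c*(x - x^3/3) * arctan y"
      by (simp add: algebra_simps)
    ultimately show ?thesis by linarith
  qed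
  have a1: "y * arctan y \<ge> 3/4 * \<bar>y\<bar> - 1" by (rule yarctan)
  have at: "\<bar>arctan y\<bar> \<le> 2" using arctan_bounded[of y] pi_less_4 by linarith
  have a2: "\<bar>c*(x - x^3/3) * arctan y\<bar> \<le> c*(\<bar>x\<bar> + \<bar>x\<bar>^3/3) * 2"
  proof -
    have "\<bar>x - x^3/3\<bar> \<le> \<bar>x\<bar> + \<bar>x\<bar>^3/3" using abs_triangle_ineq4[of x "x^3/3"] by (simp add: power_abs)
    then have "\<bar>c*(x - x^3/3)\<bar> \<le> c*(\<bar>x\<bar> + \<bar>x\<bar>^3/3)" using c by (simp add: abs_mult)
    then show ?thesis unfolding abs_mult[of _ "arctan y"]
      by (intro mult_mono) (use c at in auto)
  qed
  have a3: "k*x^2/(1+y\<^sup>2) \<le> k*x^2"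
    using k by (intro order.trans[OF divide_left_mono[of 1 "1+y\<^sup>2" "k*x^2"]]) (auto simp: add_pos_nonneg)
  have p: "x^2 = \<bar>x\<bar>^2" "x^4 = \<bar>x\<bar>^4" by (simp_all add: power_abs[symmetric] power_even_abs_numeral)
  have a2': "- (c*(x - x^3/3) * arctan y) \<le> 2*c*\<bar>x\<bar>^3/3 + 2*c*\<bar>x\<bar>"
    using a2 abs_ge_minus_self[of "c*(x - x^3/3) * arctan y"] by (simp add: algebra_simps)
  have "k*c*x^2 - k*c*x^4/3 = k*c*\<bar>x\<bar>^2 - k*c*\<bar>x\<bar>^4/3" "k*x^2 = k*\<bar>x\<bar>^2" using p by simp_all
  then show ?thesis unfolding e using a1 a2' a3 by linarith
qed


lemma poly_bound:
  fixes k c :: real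
  assumes k: "k > 0" and c: "c > 0"
  shows "\<exists>R M. R \<ge> 1 \<and> (\<forall>u. u > R \<longrightarrow> k*c*u^2 - k*c*u^4/3 + 2*c*u^3/3 + 2*c*u + k*u^2 + 1 \<le> -1)
     \<and> (\<forall>u. 0 \<le> u \<and> u \<le> R \<longrightarrow> k*c*u^2 - k*c*u^4/3 + 2*c*u^3/3 + 2*c*u + k*u^2 + 1 \<le> M)"
proof -
  define A where "A = k*c + 3*c + k + 1"
  define R where "R = max 1 (3*(A+1)/(k*c))"
  have kc: "k*c > 0" using k c by simp
  have R1: "R \<ge> 1" by (simp add: R_def)
  have i: "k*c*u^2 - k*c*u^4/3 + 2*c*u^3/3 + 2*c*u + k*u^2 + 1 \<le> -1" if u: "u > R" for u
  proof -
    have u1: "u \<ge> 1" using u R1 by simp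
    have p2: "u^2 \<le> u^3" and p1: "u \<le> u^3" and p0: "1 \<le> u^3"
      using u1 by (auto intro: power_increasing[of _ _ u, simplified])
      (metis one_le_power power_increasing numeral_le_iff semiring_norm(69) power_one_right
        le_numeral_extra(4) one_le_numeral)+
    have "k*c*u^2 \<le> k*c*u^3" "k*u^2 \<le> k*u^3" "c*u \<le> c*u^3"
      using p2 p1 kc k c by (auto intro: mult_left_mono)
    moreover have "A*u^3 = k*c*u^3 + 3*(c*u^3) + k*u^3 + u^3" by (simp add: A_def algebra_simps)
    moreover have "c*u^3 \<ge> 0" using c u1 by (intro mult_nonneg_nonneg) auto
    ultimately have s1: "k*c*u^2 + 2*c*u^3/3 + 2*c*u + k*u^2 + 1 \<le> A * u^3"
      using p0 by linarith
    have "3*(A+1)/(k*c) \<le> u" using u by (simp add: R_def)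
    then have "3*(A+1) \<le> u * (k*c)" using kc by (simp add: divide_le_eq)
    then have "3*(A+1) * u^3 \<le> (u * (k*c)) * u^3" using p0 u1 by (intro mult_right_mono) auto
    then have "(A+1) * u^3 \<le> k*c*u^4/3" by (simp add: algebra_simps power_numeral_reduce)
    with s1 p0 show ?thesis by (simp add: algebra_simps)
  qed
  have ii: "k*c*u^2 - k*c*u^4/3 + 2*c*u^3/3 + 2*c*u + k*u^2 + 1 \<le> A * R^3" if u: "0 \<le> u" "u \<le> R" for u
  proof -
    have q: "u^2 \<le> R^3" "u^3 \<le> R^3" "u \<le> R^3" "1 \<le> R^3" "0 \<le> u^4"
    proof -
      have "u^2 \<le> R^2" "u^3 \<le> R^3" using u by (auto intro: power_mono)
      moreover have "R^2 \<le> R^3" "R \<le> R^3" "1 \<le> R^3" using R1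
        by (auto intro: power_increasing[of _ _ R, simplified] one_le_power)
          (metis power_increasing numeral_le_iff semiring_norm(69) power_one_right le_numeral_extra(4) one_le_numeral)+
      ultimately show "u^2 \<le> R^3" "u^3 \<le> R^3" "u \<le> R^3" "1 \<le> R^3" "0 \<le> u^4" using u
        by (meson order_trans, simp, linarith, simp, simp)
    qed
    have "k*c*u^2 \<le> k*c*R^3" "k*u^2 \<le> k*R^3" "c*u \<le> c*R^3" "c*u^3 \<le> c*R^3" "0 \<le> k*c*u^4"
      using q kc k c by (auto intro: mult_left_mono)
    moreover have "A*R^3 = k*c*R^3 + 3*(c*R^3) + k*R^3 + R^3" by (simp add: A_def algebra_simps)
    moreover have "c*R^3 \<ge> 0" using c R1 by (intro mult_nonneg_nonneg) auto
    ultimately show ?thesis using q by linarith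
  qed
  show ?thesis using R1 i ii by blast
qed

lemma sqb: "(x::real)\<^sup>2 \<le> M \<Longrightarrow> \<bar>x\<bar> \<le> 1 + M"
proof (cases "\<bar>x\<bar> \<le> 1")
  case True
  assume "x\<^sup>2 \<le> M"
  moreover have "x\<^sup>2 \<ge> 0" by simp
  ultimately show ?thesis using True by linarith
next
  case False
  assume h: "x\<^sup>2 \<le> M"
  have "\<bar>x\<bar> * 1 \<le> \<bar>x\<bar> * \<bar>x\<bar>" using False by (intro mult_left_mono) auto
  also have "\<bar>x\<bar> * \<bar>x\<bar> = x\<^sup>2" by (simp add: power2_eq_square abs_mult_self_eq)
  finally show ?thesis using h by linarith
qed

lemma traj_bounds:
  fixes a b c :: real and v1 v2 :: "real \<Rightarrow> real"
  assumes a: "a > 0" and b: "b > 0" and c: "c > 0"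
    and d1: "\<And>t. t \<ge> 0 \<Longrightarrow> (v1 has_real_derivative a * v2 t) (at t within {0..})"
    and d2: "\<And>t. t \<ge> 0 \<Longrightarrow> (v2 has_real_derivative (- b * v1 t + c * (1 - (v1 t)\<^sup>2) * v2 t)) (at t within {0..})"
  shows "\<exists>B1 B2. \<forall>t\<ge>0. \<bar>v1 t\<bar> \<le> B1 \<and> \<bar>v2 t\<bar> \<le> B2"
proof -
  define k where "k = a*b"
  define y where "y t = a * v2 t - c * (v1 t - (v1 t)^3/3)" for t
  have dy: "(y has_real_derivative (-(k* v1 t))) (at t within {0..})" if t: "t \<ge> 0" for t
  proof -
    have "((\<lambda>t. a * v2 t - c * (v1 t - (v1 t)^3/3)) has_real_derivative
       (a * (- b * v1 t + c * (1 - (v1 t)\<^sup>2) * v2 t) - c * (a * v2 t - 3 * (v1 t)^2 * (a * v2 t) / 3))) (at t within {0..})"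
      by (rule derivative_eq_intros d1[OF t] d2[OF t] refl | simp)+
    then show ?thesis unfolding y_def[abs_def] k_def
      by (rule DERIV_cong) (simp add: algebra_simps power2_eq_square)
  qed
  define W where "W t = (y t)\<^sup>2/2 + k*(v1 t)\<^sup>2/2 - v1 t * arctan (y t)" for t
  define W' where "W' t = y t * (-k* v1 t) + k* v1 t*(a* v2 t) - ((a* v2 t) * arctan (y t) + v1 t * ((-k* v1 t)/(1 + (y t)\<^sup>2)))" for t
  have dW: "(W has_real_derivative W' t) (at t within {0..})" if t: "t \<ge> 0" for t
    unfolding W_def[abs_def] W'_def
    by (rule derivative_eq_intros d1[OF t] dy[OF t] DERIV_arctan refl | simp)+ (simp add: divide_inverse mult_ac)
  have W'eq: "W' t = y t * (-k * v1 t) + k * v1 t*(y t + c*(v1 t - v1 t^3/3)) - ((y t + c*(v1 t - v1 t^3/3)) * arctan (y t) + v1 t * ((-k * v1 t)/(1+(y t)\<^sup>2)))" for t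
  proof -
    have e: "a * v2 t = y t + c*(v1 t - v1 t^3/3)" by (simp add: y_def)
    show ?thesis unfolding W'_def e by (rule refl)
  qed
  have k: "k > 0" using a b by (simp add: k_def)
  obtain R M where R1: "R \<ge> 1"
    and Rbig: "\<And>u. u > R \<Longrightarrow> k*c*u^2 - k*c*u^4/3 + 2*c*u^3/3 + 2*c*u + k*u^2 + 1 \<le> -1"
    and Rsmall: "\<And>u. 0 \<le> u \<Longrightarrow> u \<le> R \<Longrightarrow> k*c*u^2 - k*c*u^4/3 + 2*c*u^3/3 + 2*c*u + k*u^2 + 1 \<le> M"
    using poly_bound[OF k c] by blast
  define Y where "Y = 4/3 * max M 0 + 1"
  define Wb where "Wb = Y\<^sup>2/2 + k*R\<^sup>2/2 + 2*R"
  define L where "L = max (W 0) Wb"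
  have Wd: "W' t \<le> k*c*\<bar>v1 t\<bar>^2 - k*c*\<bar>v1 t\<bar>^4/3 + 2*c*\<bar>v1 t\<bar>^3/3 + 2*c*\<bar>v1 t\<bar> + k*\<bar>v1 t\<bar>^2 + 1 - 3/4*\<bar>y t\<bar>" for t
    unfolding W'eq by (rule Wder_bound[OF k c])
  have atb: "\<bar>v1 t * arctan (y t)\<bar> \<le> 2 * \<bar>v1 t\<bar>" for t
  proof -
    have "\<bar>arctan (y t)\<bar> \<le> 2" using arctan_bounded[of "y t"] pi_less_4 by linarith
    then show ?thesis by (simp add: abs_mult mult_left_mono mult.commute)
  qed
  have Wle: "W t \<le> L" if t: "t \<ge> 0" for t
  proof (rule barrier[OF dW _ _ t])
    show "W 0 \<le> L" by (simp add: L_def)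
  next
    fix s :: real assume s: "s \<ge> 0" "W s > L"
    show "W' s \<le> 0"
    proof (cases "\<bar>v1 s\<bar> > R")
      case True
      with Wd[of s] Rbig[OF True] show ?thesis by linarith
    next
      case False
      have Q: "k*c*\<bar>v1 s\<bar>^2 - k*c*\<bar>v1 s\<bar>^4/3 + 2*c*\<bar>v1 s\<bar>^3/3 + 2*c*\<bar>v1 s\<bar> + k*\<bar>v1 s\<bar>^2 + 1 \<le> M"
        using Rsmall[of "\<bar>v1 s\<bar>"] False by simp
      show ?thesis
      proof (cases "\<bar>y s\<bar> > Y")
        case True
        with Wd[of s] Q show ?thesis unfolding Y_def by linarith
      next
        case False2: False
        have "(y s)\<^sup>2 \<le> Y\<^sup>2" 
        proof -
          have "Y \<ge> 1" by (simp add: Y_def)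
          then show ?thesis using False2 abs_le_square_iff[of "y s" Y] by simp
        qed
        moreover have "(v1 s)\<^sup>2 \<le> R\<^sup>2" using False R1 abs_le_square_iff[of "v1 s" R] by simp
        moreover have "k*(v1 s)\<^sup>2 \<le> k*R\<^sup>2" using calculation(2) k by (simp add: mult_left_mono)
        ultimately have "W s \<le> Wb" unfolding W_def Wb_def using atb[of s] False by linarith
        then show ?thesis using s(2) by (simp add: L_def)
      qed
    qed
  qed
  have Wlow: "W t \<ge> (y t)\<^sup>2/2 + k*(v1 t)\<^sup>2/4 - 4/k" for t
  proof -
    have "k/4 * (\<bar>v1 t\<bar> - 4/k)\<^sup>2 \<ge> 0" using k by simp
    moreover have "k/4 * (\<bar>v1 t\<bar> - 4/k)\<^sup>2 = k*(v1 t)\<^sup>2/4 - 2*\<bar>v1 t\<bar> + 4/k"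
      using k by (simp add: power2_eq_square field_simps)
    ultimately show ?thesis unfolding W_def using atb[of t] by linarith
  qed
  define B1 where "B1 = 1 + 4*(L + 4/k)/k"
  define By where "By = 1 + 2*(L + 4/k)"
  have bx: "\<bar>v1 t\<bar> \<le> B1" and byy: "\<bar>y t\<bar> \<le> By" if t: "t \<ge> 0" for t
  proof -
    have w: "(y t)\<^sup>2/2 + k*(v1 t)\<^sup>2/4 - 4/k \<le> L" using Wlow[of t] Wle[OF t] by linarith
    have "k*(v1 t)\<^sup>2 \<ge> 0" using k by simp
    moreover have "\<And>A B C::real. A/2 + B/4 - C \<le> L \<Longrightarrow> 0 \<le> B \<Longrightarrow> A \<le> 2*(L + C)" by (simp add: field_simps)
    ultimately have "(y t)\<^sup>2 \<le> 2*(L + 4/k)" using w by blast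
    then show "\<bar>y t\<bar> \<le> By" unfolding By_def by (rule sqb)
    have "\<And>A B C::real. A/2 + B/4 - C \<le> L \<Longrightarrow> 0 \<le> A \<Longrightarrow> B \<le> 4*(L + C)" by (simp add: field_simps)
    then have "k*(v1 t)\<^sup>2 \<le> 4*(L + 4/k)" using w zero_le_power2[of "y t"] by blast
    then have "(v1 t)\<^sup>2 \<le> 4*(L + 4/k)/k" using k by (simp add: le_divide_eq mult.commute)
    then show "\<bar>v1 t\<bar> \<le> B1" unfolding B1_def by (rule sqb)
  qed
  define B2 where "B2 = (By + c*(B1 + B1^3/3))/a"
  have "\<bar>v2 t\<bar> \<le> B2" if t: "t \<ge> 0" for t
  proof -
    have e: "v2 t = (y t + c*(v1 t - v1 t^3/3))/a" using a by (simp add: y_def field_simps)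
    have "\<bar>v1 t - v1 t^3/3\<bar> \<le> \<bar>v1 t\<bar> + \<bar>v1 t\<bar>^3/3"
      using abs_triangle_ineq4[of "v1 t" "v1 t^3/3"] by (simp add: power_abs)
    also have "\<dots> \<le> B1 + B1^3/3" using bx[OF t] by (intro add_mono divide_right_mono power_mono) auto
    finally have h1: "c * \<bar>v1 t - v1 t^3/3\<bar> \<le> c*(B1 + B1^3/3)" using c by (intro mult_left_mono) auto
    have h2: "\<bar>c*(v1 t - v1 t^3/3)\<bar> = c * \<bar>v1 t - v1 t^3/3\<bar>" using c by (simp add: abs_mult)
    have "\<bar>y t + c*(v1 t - v1 t^3/3)\<bar> \<le> By + c*(B1 + B1^3/3)"
      using byy[OF t] abs_triangle_ineq[of "y t" "c*(v1 t - v1 t^3/3)"] h1 h2 by linarith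
    then show ?thesis unfolding e B2_def using a by (simp add: divide_right_mono abs_divide)
  qed
  then show ?thesis using bx by blast
qed

lemma traj_low:
  fixes a b c :: real and v1 v2 :: "real \<Rightarrow> real"
  assumes a: "a > 0" and b: "b > 0" and c: "c > 0"
    and d1: "\<And>t. t \<ge> 0 \<Longrightarrow> (v1 has_real_derivative a * v2 t) (at t within {0..})"
    and d2: "\<And>t. t \<ge> 0 \<Longrightarrow> (v2 has_real_derivative (- b * v1 t + c * (1 - (v1 t)\<^sup>2) * v2 t)) (at t within {0..})"
    and nz: "(v1 0, v2 0) \<noteq> (0, 0)"
  shows "\<exists>\<rho>>0. \<forall>t\<ge>0. b*(v1 t)\<^sup>2 + a*(v2 t)\<^sup>2 \<ge> \<rho>"
proof -
  define V where "V t = -(b*(v1 t)\<^sup>2 + a*(v2 t)\<^sup>2)" for t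
  define V' where "V' t = -(b*(2* v1 t*(a * v2 t)) + a*(2* v2 t*(- b * v1 t + c * (1 - (v1 t)\<^sup>2) * v2 t)))" for t
  have dV: "(V has_real_derivative V' t) (at t within {0..})" if t: "t \<ge> 0" for t
    unfolding V_def[abs_def] V'_def
    by (rule derivative_eq_intros d1[OF t] d2[OF t] refl | simp)+
  have V'eq: "V' t = -(2*a*c*((1 - (v1 t)\<^sup>2) * (v2 t)\<^sup>2))" for t
    unfolding V'_def by (simp add: algebra_simps power2_eq_square)
  define \<rho> where "\<rho> = min (-V 0) b"
  have V0: "-V 0 > 0"
  proof -
    have "v1 0 \<noteq> 0 \<or> v2 0 \<noteq> 0" using nz by auto
    then have "b*(v1 0)\<^sup>2 > 0 \<or> a*(v2 0)\<^sup>2 > 0" using a b by auto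
    moreover have "b*(v1 0)\<^sup>2 \<ge> 0" "a*(v2 0)\<^sup>2 \<ge> 0" using a b by auto
    ultimately show ?thesis unfolding V_def by linarith
  qed
  have rho: "\<rho> > 0" using V0 b by (simp add: \<rho>_def)
  have "V t \<le> -\<rho>" if t: "t \<ge> 0" for t
  proof (rule barrier[OF dV _ _ t])
    show "V 0 \<le> -\<rho>" by (simp add: \<rho>_def)
  next
    fix s :: real assume s: "s \<ge> 0" "V s > -\<rho>"
    then have "b*(v1 s)\<^sup>2 + a*(v2 s)\<^sup>2 < b" unfolding V_def \<rho>_def by linarith
    moreover have "a*(v2 s)\<^sup>2 \<ge> 0" using a by simp
    ultimately have "b*(v1 s)\<^sup>2 < b*1" by linarith
    then have "(v1 s)\<^sup>2 < 1" using b by (simp only: mult_less_cancel_left_pos)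
    then have "(1 - (v1 s)\<^sup>2) * (v2 s)\<^sup>2 \<ge> 0" by simp
    then show "V' s \<le> 0" unfolding V'eq using a c by simp
  qed
  then show ?thesis using rho unfolding V_def by (intro exI[of _ \<rho>]) force
qed

lemma pe_windows:
  fixes a b c :: real and v1 v2 :: "real \<Rightarrow> real"
  assumes a: "a > 0" and b: "b > 0" and c: "c > 0"
    and d1: "\<And>t. t \<ge> 0 \<Longrightarrow> (v1 has_real_derivative a * v2 t) (at t within {0..})"
    and d2: "\<And>t. t \<ge> 0 \<Longrightarrow> (v2 has_real_derivative (- b * v1 t + c * (1 - (v1 t)\<^sup>2) * v2 t)) (at t within {0..})"
    and bv1: "\<And>t. t \<ge> 0 \<Longrightarrow> \<bar>v1 t\<bar> \<le> B1"
    and bv2: "\<And>t. t \<ge> 0 \<Longrightarrow> \<bar>v2 t\<bar> \<le> B2"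
    and low: "\<And>t. t \<ge> 0 \<Longrightarrow> b * (v1 t)\<^sup>2 + a * (v2 t)\<^sup>2 \<ge> \<rho>"
    and rho: "\<rho> > 0"
  shows "\<exists>\<kappa>>0. \<forall>s\<ge>0. integral {s..s+3} (\<lambda>\<tau>. (v1 \<tau>)\<^sup>2) \<ge> \<kappa> \<and> integral {s..s+3} (\<lambda>\<tau>. (v2 \<tau>)\<^sup>2) \<ge> \<kappa>
     \<and> integral {s..s+3} (\<lambda>\<tau>. ((1 - (v1 \<tau>)\<^sup>2) * v2 \<tau>)\<^sup>2) \<ge> \<kappa>"
proof -
  have B1: "B1 \<ge> 0" using bv1[of 0] by simp
  have B2: "B2 \<ge> 0" using bv2[of 0] by simp
  define K where "K = 1 + B1\<^sup>2"
  have K1: "K \<ge> 1" by (simp add: K_def)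
  have sq1: "(v1 t)\<^sup>2 \<le> B1\<^sup>2" if "t \<ge> 0" for t
    using bv1[OF that] B1 abs_le_square_iff[of "v1 t" B1] by simp
  have bK: "\<bar>1 - (v1 t)\<^sup>2\<bar> \<le> K" if "t \<ge> 0" for t
    using sq1[OF that] unfolding K_def by (simp add: abs_le_iff)
  define f2' where "f2' t = - b * v1 t + c * (1 - (v1 t)\<^sup>2) * v2 t" for t
  define L2 where "L2 = b * B1 + c * K * B2 + 1"
  have L2: "L2 > 0" using b c B1 B2 K1 by (simp add: L2_def add_nonneg_pos)
  have bf2: "\<bar>f2' t\<bar> \<le> L2" if t: "t \<ge> 0" for t
  proof -
    have "\<bar>b * v1 t\<bar> \<le> b * B1" using bv1[OF t] b by (simp add: abs_mult)
    moreover have "\<bar>c * (1 - (v1 t)\<^sup>2) * v2 t\<bar> \<le> c * K * B2"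
      unfolding abs_mult using bK[OF t] bv2[OF t] c K1
      by (intro mult_mono) auto
    ultimately show ?thesis unfolding f2'_def L2_def by linarith
  qed
  define w where "w t = (1 - (v1 t)\<^sup>2) * v2 t" for t
  define w' where "w' t = (- (2 * v1 t * (a * v2 t))) * v2 t + (1 - (v1 t)\<^sup>2) * f2' t" for t
  have dw: "(w has_real_derivative w' t) (at t within {0..})" if t: "t \<ge> 0" for t
  proof -
    have "((\<lambda>t. (1 - (v1 t)\<^sup>2) * v2 t) has_real_derivative w' t) (at t within {0..})"
      unfolding w'_def f2'_def
      by (rule derivative_eq_intros d1[OF t] d2[OF t] refl | simp)+
    then show ?thesis unfolding w_def[abs_def] .
  qed
  define L3 where "L3 = 2 * B1 * a * B2 * B2 + K * L2 + 1"
  have L3: "L3 > 0" using a B1 B2 K1 L2 by (simp add: L3_def add_nonneg_pos)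
  have bw': "\<bar>w' t\<bar> \<le> L3" if t: "t \<ge> 0" for t
  proof -
    have "\<bar>(- (2 * v1 t * (a * v2 t))) * v2 t\<bar> = 2 * a * (\<bar>v1 t\<bar> * \<bar>v2 t\<bar> * \<bar>v2 t\<bar>)"
      using a by (simp add: abs_mult)
    also have "\<dots> \<le> 2 * a * (B1 * B2 * B2)"
      using bv1[OF t] bv2[OF t] a by (intro mult_left_mono mult_mono) auto
    finally have h1: "\<bar>(- (2 * v1 t * (a * v2 t))) * v2 t\<bar> \<le> 2 * B1 * a * B2 * B2" by (simp add: mult_ac)
    have h2: "\<bar>(1 - (v1 t)\<^sup>2) * f2' t\<bar> \<le> K * L2"
      unfolding abs_mult using bK[OF t] bf2[OF t] K1 by (intro mult_mono) auto
    show ?thesis unfolding w'_def L3_def using h1 h2 abs_triangle_ineq[of "(- (2 * v1 t * (a * v2 t))) * v2 t" "(1 - (v1 t)\<^sup>2) * f2' t"] by linarith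
  qed
  define L1 where "L1 = a * B2 + 1"
  have L1: "L1 > 0" using a B2 by (simp add: L1_def add_nonneg_pos)
  have bv1': "\<bar>a * v2 t\<bar> \<le> L1" if t: "t \<ge> 0" for t
  proof -
    have "a * \<bar>v2 t\<bar> \<le> a * B2" using bv2[OF t] a by (intro mult_left_mono) auto
    moreover have "\<bar>a * v2 t\<bar> = a * \<bar>v2 t\<bar>" using a by (simp add: abs_mult)
    ultimately show ?thesis unfolding L1_def by linarith
  qed
  have d2': "\<And>t. t \<ge> 0 \<Longrightarrow> (v2 has_real_derivative f2' t) (at t within {0..})"
    unfolding f2'_def by (rule d2)
  have lip1: "\<bar>v1 y - v1 x\<bar> \<le> L1 * (y - x)" if "0 \<le> x" "x \<le> y" for x y
    by (rule lip0[OF d1 bv1' that])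
  have lip2: "\<bar>v2 y - v2 x\<bar> \<le> L2 * (y - x)" if "0 \<le> x" "x \<le> y" for x y
    by (rule lip0[OF d2' bf2 that])
  have lip3: "\<bar>w y - w x\<bar> \<le> L3 * (y - x)" if "0 \<le> x" "x \<le> y" for x y
    by (rule lip0[OF dw bw' that])
  have c1: "continuous_on {0..} v1" by (rule cont0[OF d1])
  have c2: "continuous_on {0..} v2" by (rule cont0[OF d2])
  have c3: "continuous_on {0..} w" by (rule cont0[OF dw])
  define D where "D = 2 + a * b + c * K"
  have D: "D > 0" using a b c K1 by (simp add: D_def add_pos_nonneg)
  define \<eta>A where "\<eta>A = sqrt (min (\<rho>/(2*a)) (b*\<rho>/(2*D\<^sup>2)))"
  have \<eta>A2: "\<eta>A\<^sup>2 = min (\<rho>/(2*a)) (b*\<rho>/(2*D\<^sup>2))" unfolding \<eta>A_def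
    using rho a b D by (intro real_sqrt_pow2) simp
  have \<eta>A: "\<eta>A > 0" unfolding \<eta>A_def using rho a b D by simp
  have ptA: "\<exists>s0. s \<le> s0 \<and> s0 \<le> s + 1 \<and> \<bar>v2 s0\<bar> \<ge> \<eta>A" if s: "s \<ge> 0" for s
  proof (rule ccontr)
    assume "\<not> ?thesis"
    then have sm: "\<And>\<tau>. s \<le> \<tau> \<Longrightarrow> \<tau> \<le> s + 1 \<Longrightarrow> \<bar>v2 \<tau>\<bar> < \<eta>A" by force
    have "(v2 s)\<^sup>2 \<le> \<eta>A\<^sup>2" using sm[of s] \<eta>A abs_le_square_iff[of "v2 s" \<eta>A] by simp
    then have "a * (v2 s)\<^sup>2 \<le> a * \<eta>A\<^sup>2" using a by (simp add: mult_left_mono)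
    moreover have "a * \<eta>A\<^sup>2 \<le> \<rho>/2" using a unfolding \<eta>A2 by (simp add: min_def field_simps)
    ultimately have "b * (v1 s)\<^sup>2 \<ge> \<rho>/2" using low[OF s] by linarith
    then have "b * (b * (v1 s)\<^sup>2) \<ge> b * (\<rho>/2)" using b by (simp add: mult_left_mono)
    moreover have "D\<^sup>2 * \<eta>A\<^sup>2 \<le> b * (\<rho>/2)" using D unfolding \<eta>A2 by (simp add: min_def field_simps)
    moreover have "(D * \<eta>A)\<^sup>2 = D\<^sup>2 * \<eta>A\<^sup>2" by (simp add: power_mult_distrib)
    moreover have "(b * \<bar>v1 s\<bar>)\<^sup>2 = b * (b * (v1 s)\<^sup>2)" by (simp add: power_mult_distrib power2_eq_square)
    ultimately have "(D * \<eta>A)\<^sup>2 \<le> (b * \<bar>v1 s\<bar>)\<^sup>2" by linarith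
    then have Dle: "D * \<eta>A \<le> b * \<bar>v1 s\<bar>" by (rule power2_le_imp_le) (use b in auto)
    obtain \<xi> where \<xi>: "s < \<xi>" "\<xi> < s + 1" "v2 (s+1) - v2 s = f2' \<xi> * (s + 1 - s)"
      using mvt0[OF d2' s, of "s+1"] by auto
    have "\<bar>f2' \<xi>\<bar> < 2 * \<eta>A" using \<xi>(3) sm[of s] sm[of "s+1"] by simp
    obtain \<zeta> where \<zeta>: "s < \<zeta>" "\<zeta> < \<xi>" "v1 \<xi> - v1 s = a * v2 \<zeta> * (\<xi> - s)"
      using mvt0[OF d1 s \<xi>(1)] by auto
    have "\<bar>v1 \<xi> - v1 s\<bar> = a * \<bar>v2 \<zeta>\<bar> * (\<xi> - s)" using \<zeta> a by (simp add: abs_mult)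
    also have "\<dots> \<le> a * \<eta>A * 1" using sm[of \<zeta>] \<zeta> \<xi> a by (intro mult_mono) auto
    finally have v1c: "\<bar>v1 \<xi> - v1 s\<bar> \<le> a * \<eta>A" by simp
    have "\<bar>c * (1 - (v1 \<xi>)\<^sup>2) * v2 \<xi>\<bar> \<le> c * K * \<eta>A"
      unfolding abs_mult using bK[of \<xi>] sm[of \<xi>] \<xi> s c K1 by (intro mult_mono) auto
    moreover have "\<bar>b * v1 \<xi>\<bar> \<ge> b * \<bar>v1 s\<bar> - b * (a * \<eta>A)"
    proof -
      have "\<bar>v1 \<xi>\<bar> \<ge> \<bar>v1 s\<bar> - a * \<eta>A" using v1c by linarith
      then have "b * \<bar>v1 \<xi>\<bar> \<ge> b * (\<bar>v1 s\<bar> - a * \<eta>A)" using b by (simp add: mult_left_mono)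
      then show ?thesis using b by (simp add: abs_mult algebra_simps)
    qed
    ultimately have "\<bar>f2' \<xi>\<bar> \<ge> b * \<bar>v1 s\<bar> - b * (a * \<eta>A) - c * K * \<eta>A"
      unfolding f2'_def using abs_triangle_ineq2[of "- b * v1 \<xi>" "- (c * (1 - (v1 \<xi>)\<^sup>2) * v2 \<xi>)"]
      by (simp add: abs_mult)
    moreover have "D * \<eta>A = 2 * \<eta>A + b * (a * \<eta>A) + c * K * \<eta>A" by (simp add: D_def algebra_simps)
    ultimately show False using Dle \<open>\<bar>f2' \<xi>\<bar> < 2 * \<eta>A\<close> by linarith
  qed
  define \<eta>B where "\<eta>B = sqrt (min (\<rho>/(2*b)) (a*\<rho>/8))"
  have \<eta>B2: "\<eta>B\<^sup>2 = min (\<rho>/(2*b)) (a*\<rho>/8)" unfolding \<eta>B_def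
    using rho a b by (intro real_sqrt_pow2) simp
  have \<eta>B: "\<eta>B > 0" unfolding \<eta>B_def using rho a b by simp
  have ptB: "\<exists>s0. s \<le> s0 \<and> s0 \<le> s + 1 \<and> \<bar>v1 s0\<bar> \<ge> \<eta>B" if s: "s \<ge> 0" for s
  proof (rule ccontr)
    assume "\<not> ?thesis"
    then have sm: "\<And>\<tau>. s \<le> \<tau> \<Longrightarrow> \<tau> \<le> s + 1 \<Longrightarrow> \<bar>v1 \<tau>\<bar> < \<eta>B" by force
    obtain \<xi> where \<xi>: "s < \<xi>" "\<xi> < s + 1" "v1 (s+1) - v1 s = a * v2 \<xi> * (s + 1 - s)"
      using mvt0[OF d1 s, of "s+1"] by auto
    have lt: "a * \<bar>v2 \<xi>\<bar> < 2 * \<eta>B" using \<xi>(3) sm[of s] sm[of "s+1"] a by (simp add: abs_mult)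
    have "(v1 \<xi>)\<^sup>2 \<le> \<eta>B\<^sup>2" using sm[of \<xi>] \<xi> \<eta>B abs_le_square_iff[of "v1 \<xi>" \<eta>B] by simp
    then have "b * (v1 \<xi>)\<^sup>2 \<le> b * \<eta>B\<^sup>2" using b by (simp add: mult_left_mono)
    moreover have "b * \<eta>B\<^sup>2 \<le> \<rho>/2" using b unfolding \<eta>B2 by (simp add: min_def field_simps)
    ultimately have "a * (v2 \<xi>)\<^sup>2 \<ge> \<rho>/2" using low[of \<xi>] \<xi> s by linarith
    then have "a * (a * (v2 \<xi>)\<^sup>2) \<ge> a * (\<rho>/2)" using a by (simp add: mult_left_mono)
    moreover have "4 * \<eta>B\<^sup>2 \<le> a * (\<rho>/2)" unfolding \<eta>B2 by (simp add: min_def field_simps)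
    moreover have "(2 * \<eta>B)\<^sup>2 = 4 * \<eta>B\<^sup>2" by (simp add: power_mult_distrib)
    moreover have "(a * \<bar>v2 \<xi>\<bar>)\<^sup>2 = a * (a * (v2 \<xi>)\<^sup>2)" by (simp add: power_mult_distrib power2_eq_square)
    ultimately have "(2 * \<eta>B)\<^sup>2 \<le> (a * \<bar>v2 \<xi>\<bar>)\<^sup>2" by linarith
    then have "2 * \<eta>B \<le> a * \<bar>v2 \<xi>\<bar>" by (rule power2_le_imp_le) (use a in auto)
    with lt show False by linarith
  qed
  define r where "r = min (1/2) (min (\<eta>A/(2*L2)) (1/(2*a*(B2+1))))"
  have r: "r > 0" "r \<le> 1/2" "L2 * r \<le> \<eta>A/2" "a * (B2+1) * r \<le> 1/2"
  proof -
    have aB: "a * (B2 + 1) > 0" using a B2 by simp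
    show "r > 0" unfolding r_def using \<eta>A L2 aB by simp
    show "r \<le> 1/2" unfolding r_def by simp
    have "r \<le> \<eta>A/(2*L2)" unfolding r_def by simp
    then have "L2 * r \<le> L2 * (\<eta>A/(2*L2))" using L2 by (intro mult_left_mono) auto
    also have "\<dots> = \<eta>A/2" using L2 by simp
    finally show "L2 * r \<le> \<eta>A/2" .
    have "r \<le> 1/(2*(a*(B2+1)))" unfolding r_def by (simp add: mult.assoc)
    then have "a * (B2+1) * r \<le> a * (B2+1) * (1/(2*(a*(B2+1))))" using aB by (intro mult_left_mono) auto
    also have "\<dots> = 1/2" using aB a B2 by simp
    finally show "a * (B2+1) * r \<le> 1/2" .
  qed
  define \<eta>C where "\<eta>C = min (3*\<eta>A/8) (a*r*\<eta>A\<^sup>2/8)"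
  have \<eta>C: "\<eta>C > 0" using \<eta>A a r by (simp add: \<eta>C_def)
  have ptC: "\<exists>s0. s \<le> s0 \<and> s0 \<le> s + 2 \<and> \<bar>w s0\<bar> \<ge> \<eta>C" if s: "s \<ge> 0" for s
  proof (rule ccontr)
    assume "\<not> ?thesis"
    then have sm: "\<And>\<tau>. s \<le> \<tau> \<Longrightarrow> \<tau> \<le> s + 2 \<Longrightarrow> \<bar>w \<tau>\<bar> < \<eta>C" by force
    obtain s1 where s1: "s \<le> s1" "s1 \<le> s + 1" "\<bar>v2 s1\<bar> \<ge> \<eta>A" using ptA[OF s] by blast
    have v2big: "\<bar>v2 \<tau>\<bar> \<ge> \<eta>A/2" if "s1 \<le> \<tau>" "\<tau> \<le> s1 + r" for \<tau>
    proof -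
      have "\<bar>v2 \<tau> - v2 s1\<bar> \<le> L2 * (\<tau> - s1)" using lip2[of s1 \<tau>] that s s1 by auto
      also have "\<dots> \<le> L2 * r" using that L2 by (intro mult_left_mono) auto
      finally show ?thesis using r s1 by linarith
    qed
    have e: "\<bar>1 - (v1 \<tau>)\<^sup>2\<bar> * (\<eta>A/2) < \<eta>C" if "s1 \<le> \<tau>" "\<tau> \<le> s1 + r" for \<tau>
    proof -
      have "\<bar>1 - (v1 \<tau>)\<^sup>2\<bar> * (\<eta>A/2) \<le> \<bar>1 - (v1 \<tau>)\<^sup>2\<bar> * \<bar>v2 \<tau>\<bar>"
        using v2big[OF that] by (intro mult_left_mono) auto
      also have "\<dots> = \<bar>w \<tau>\<bar>" by (simp add: w_def abs_mult)
      also have "\<dots> < \<eta>C" using sm[of \<tau>] that s1 r by auto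
      finally show ?thesis .
    qed
    define p where "p = v1 s1"
    define q where "q = v1 (s1 + r)"
    have ep: "\<bar>1 - p\<^sup>2\<bar> * (\<eta>A/2) < \<eta>C" using e[of s1] r by (simp add: p_def)
    have eq: "\<bar>1 - q\<^sup>2\<bar> * (\<eta>A/2) < \<eta>C" using e[of "s1 + r"] r by (simp add: q_def)
    obtain \<xi> where \<xi>: "s1 < \<xi>" "\<xi> < s1 + r" "v1 (s1 + r) - v1 s1 = a * v2 \<xi> * (s1 + r - s1)"
      using mvt0[OF d1, of s1 "s1 + r"] s s1 r by auto
    have qp: "\<bar>q - p\<bar> = a * \<bar>v2 \<xi>\<bar> * r" using \<xi> a r by (simp add: p_def q_def abs_mult)
    have d_low: "\<bar>q - p\<bar> \<ge> a * (\<eta>A/2) * r" unfolding qp using v2big[of \<xi>] \<xi> a r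
      by (intro mult_right_mono mult_left_mono) auto
    have d_up: "\<bar>q - p\<bar> \<le> 1/2"
    proof -
      have "a * \<bar>v2 \<xi>\<bar> * r \<le> a * (B2 + 1) * r" using bv2[of \<xi>] \<xi> s s1 a r by (intro mult_right_mono mult_left_mono) auto
      then show ?thesis using qp r by linarith
    qed
    have "\<eta>C \<le> 3*\<eta>A/8" by (simp add: \<eta>C_def)
    then have "\<bar>1 - p\<^sup>2\<bar> * (\<eta>A/2) < (3/4) * (\<eta>A/2)" "\<bar>1 - q\<^sup>2\<bar> * (\<eta>A/2) < (3/4) * (\<eta>A/2)"
      using ep eq by linarith+
    then have "\<bar>1 - p\<^sup>2\<bar> < 3/4" "\<bar>1 - q\<^sup>2\<bar> < 3/4" using \<eta>A by (simp_all add: mult_less_cancel_right_pos)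
    then have h: "1 - p\<^sup>2 < 3/4" "1 - q\<^sup>2 < 3/4" using abs_ge_self[of "1 - p\<^sup>2"] abs_ge_self[of "1 - q\<^sup>2"] by linarith+
    have "(1/2::real)\<^sup>2 = 1/4" by (simp add: power2_eq_square)
    then have "p\<^sup>2 \<ge> (1/2)\<^sup>2" "q\<^sup>2 \<ge> (1/2)\<^sup>2" using h by linarith+
    then have pq: "\<bar>p\<bar> \<ge> 1/2" "\<bar>q\<bar> \<ge> 1/2"
      using abs_le_square_iff[of "1/2" p] abs_le_square_iff[of "1/2" q] by simp_all
    have sum: "\<bar>q + p\<bar> \<ge> 1" using pq d_up by linarith
    have "q\<^sup>2 - p\<^sup>2 = (q - p) * (q + p)" by (simp add: power2_eq_square algebra_simps)
    then have "\<bar>q\<^sup>2 - p\<^sup>2\<bar> = \<bar>q - p\<bar> * \<bar>q + p\<bar>" by (simp add: abs_mult)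
    also have "\<dots> \<ge> a * (\<eta>A/2) * r * 1" using d_low sum by (intro mult_mono) auto
    finally have big: "\<bar>q\<^sup>2 - p\<^sup>2\<bar> \<ge> a * (\<eta>A/2) * r" by simp
    have "(\<bar>1 - p\<^sup>2\<bar> + \<bar>1 - q\<^sup>2\<bar>) * (\<eta>A/2) < 2 * \<eta>C" using ep eq by (simp add: algebra_simps)
    also have "2 * \<eta>C \<le> a * r * \<eta>A\<^sup>2/4" by (simp add: \<eta>C_def)
    also have "\<dots> = (a * (\<eta>A/2) * r) * (\<eta>A/2)" by (simp add: power2_eq_square)
    finally have "\<bar>1 - p\<^sup>2\<bar> + \<bar>1 - q\<^sup>2\<bar> < a * (\<eta>A/2) * r" using \<eta>A by (simp add: mult_less_cancel_right_pos mult_ac)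
    moreover have "\<bar>q\<^sup>2 - p\<^sup>2\<bar> \<le> \<bar>1 - p\<^sup>2\<bar> + \<bar>1 - q\<^sup>2\<bar>" by linarith
    ultimately show False using big by linarith
  qed
  define \<kappa>1 where "\<kappa>1 = min 1 (\<eta>B/(2*L1)) * \<eta>B\<^sup>2/4"
  define \<kappa>2 where "\<kappa>2 = min 1 (\<eta>A/(2*L2)) * \<eta>A\<^sup>2/4"
  define \<kappa>3 where "\<kappa>3 = min 1 (\<eta>C/(2*L3)) * \<eta>C\<^sup>2/4"
  have \<kappa>s: "\<kappa>1 > 0" "\<kappa>2 > 0" "\<kappa>3 > 0" using \<eta>A \<eta>B \<eta>C L1 L2 L3 by (simp_all add: \<kappa>1_def \<kappa>2_def \<kappa>3_def)
  have W1: "integral {s..s+3} (\<lambda>\<tau>. (v1 \<tau>)\<^sup>2) \<ge> \<kappa>1" if s: "s \<ge> 0" for s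
  proof -
    obtain s0 where "s \<le> s0" "s0 \<le> s + 1" "\<bar>v1 s0\<bar> \<ge> \<eta>B" using ptB[OF s] by blast
    then show ?thesis using window[OF c1 lip1 L1 \<eta>B s, of s0 2] unfolding \<kappa>1_def by (simp add: add.assoc)
  qed
  have W2: "integral {s..s+3} (\<lambda>\<tau>. (v2 \<tau>)\<^sup>2) \<ge> \<kappa>2" if s: "s \<ge> 0" for s
  proof -
    obtain s0 where "s \<le> s0" "s0 \<le> s + 1" "\<bar>v2 s0\<bar> \<ge> \<eta>A" using ptA[OF s] by blast
    then show ?thesis using window[OF c2 lip2 L2 \<eta>A s, of s0 2] unfolding \<kappa>2_def by (simp add: add.assoc)
  qed
  have W3: "integral {s..s+3} (\<lambda>\<tau>. (w \<tau>)\<^sup>2) \<ge> \<kappa>3" if s: "s \<ge> 0" for s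
  proof -
    obtain s0 where "s \<le> s0" "s0 \<le> s + 2" "\<bar>w s0\<bar> \<ge> \<eta>C" using ptC[OF s] by blast
    then show ?thesis using window[OF c3 lip3 L3 \<eta>C s, of s0 2] unfolding \<kappa>3_def by (simp add: add.assoc)
  qed
  have m: "min \<kappa>1 (min \<kappa>2 \<kappa>3) \<le> \<kappa>1" "min \<kappa>1 (min \<kappa>2 \<kappa>3) \<le> \<kappa>2" "min \<kappa>1 (min \<kappa>2 \<kappa>3) \<le> \<kappa>3"
    by auto
  have "min \<kappa>1 (min \<kappa>2 \<kappa>3) > 0" using \<kappa>s by simp
  moreover have "\<forall>s\<ge>0. integral {s..s+3} (\<lambda>\<tau>. (v1 \<tau>)\<^sup>2) \<ge> min \<kappa>1 (min \<kappa>2 \<kappa>3) \<and> integral {s..s+3} (\<lambda>\<tau>. (v2 \<tau>)\<^sup>2) \<ge> min \<kappa>1 (min \<kappa>2 \<kappa>3)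
     \<and> integral {s..s+3} (\<lambda>\<tau>. ((1 - (v1 \<tau>)\<^sup>2) * v2 \<tau>)\<^sup>2) \<ge> min \<kappa>1 (min \<kappa>2 \<kappa>3)"
  proof (intro allI impI conjI)
    fix s :: real assume s: "s \<ge> 0"
    show "integral {s..s+3} (\<lambda>\<tau>. (v1 \<tau>)\<^sup>2) \<ge> min \<kappa>1 (min \<kappa>2 \<kappa>3)" using W1[OF s] m by linarith
    show "integral {s..s+3} (\<lambda>\<tau>. (v2 \<tau>)\<^sup>2) \<ge> min \<kappa>1 (min \<kappa>2 \<kappa>3)" using W2[OF s] m by linarith
    show "integral {s..s+3} (\<lambda>\<tau>. ((1 - (v1 \<tau>)\<^sup>2) * v2 \<tau>)\<^sup>2) \<ge> min \<kappa>1 (min \<kappa>2 \<kappa>3)"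
      using W3[OF s] m unfolding w_def by linarith
  qed
  ultimately show ?thesis by blast
qed
lemma pe_final:
  fixes a :: real and v1 v2 :: "real \<Rightarrow> real"
  assumes a: "a > 0"
    and d1: "\<And>t. t \<ge> 0 \<Longrightarrow> (v1 has_real_derivative a * v2 t) (at t within {0..})"
    and c1: "continuous_on {0..} v1" and c2: "continuous_on {0..} v2"
    and bv1: "\<And>t. t \<ge> 0 \<Longrightarrow> \<bar>v1 t\<bar> \<le> B1"
    and bv2: "\<And>t. t \<ge> 0 \<Longrightarrow> \<bar>v2 t\<bar> \<le> B2"
    and \<kappa>: "\<kappa> > 0"
    and win: "\<forall>s\<ge>0. integral {s..s+3} (\<lambda>\<tau>. (v1 \<tau>)\<^sup>2) \<ge> \<kappa> \<and> integral {s..s+3} (\<lambda>\<tau>. (v2 \<tau>)\<^sup>2) \<ge> \<kappa>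
     \<and> integral {s..s+3} (\<lambda>\<tau>. ((1 - (v1 \<tau>)\<^sup>2) * v2 \<tau>)\<^sup>2) \<ge> \<kappa>"
  shows "persistently_exciting (\<lambda>t. transpose (vdp_phi (v1 t) (v2 t)))"
proof -
  have B1: "B1 \<ge> 0" using bv1[of 0] by simp
  have B2: "B2 \<ge> 0" using bv2[of 0] by simp
  define K where "K = 1 + B1\<^sup>2"
  have K1: "K \<ge> 1" by (simp add: K_def)
  have sq1: "(v1 t)\<^sup>2 \<le> B1\<^sup>2" if "t \<ge> 0" for t
    using bv1[OF that] B1 abs_le_square_iff[of "v1 t" B1] by simp
  have bK: "\<bar>1 - (v1 t)\<^sup>2\<bar> \<le> K" if "t \<ge> 0" for t
    using sq1[OF that] unfolding K_def by (simp add: abs_le_iff)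
  define w where "w t = (1 - (v1 t)\<^sup>2) * v2 t" for t
  have cw: "continuous_on {0..} w" unfolding w_def[abs_def] by (intro continuous_intros c1 c2)
  have bnd: "bounded ((\<lambda>t. transpose (vdp_phi (v1 t) (v2 t))) ` {0..})"
  proof -
    have "norm (transpose (vdp_phi (v1 t) (v2 t))) \<le> 6 * (B1 + B2 + K * B2)" if t: "t \<ge> 0" for t
    proof -
      have "\<bar>(1 - (v1 t)\<^sup>2) * v2 t\<bar> \<le> K * B2" unfolding abs_mult
        using bK[OF t] bv2[OF t] K1 by (intro mult_mono) auto
      then have "6 * (\<bar>v1 t\<bar> + \<bar>v2 t\<bar> + \<bar>(1 - (v1 t)\<^sup>2) * v2 t\<bar>) \<le> 6 * (B1 + B2 + K * B2)"
        using bv1[OF t] bv2[OF t] by (intro mult_left_mono add_mono) auto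
      then show ?thesis using vdp_norm[of "v1 t" "v2 t"] by linarith
    qed
    then show ?thesis unfolding bounded_iff by auto
  qed
  have pc: "piecewise_continuous (\<lambda>t. transpose (vdp_phi (v1 t) (v2 t)))"
    unfolding piecewise_continuous_def
  proof (intro allI impI exI[of _ "{}"] conjI)
    fix T :: real
    show "continuous_on ({0..T} - {}) (\<lambda>t. transpose (vdp_phi (v1 t) (v2 t)))"
      by (rule vdp_cont1; rule continuous_on_subset[OF _ ]) (use c1 c2 in auto)
  qed auto
  define C where "C = 2 * (B1\<^sup>2/2 + B1^4/4) / a"
  have C0: "C \<ge> 0" using a by (simp add: C_def)
  define N where "N = nat \<lceil>C/\<kappa>\<rceil> + 1"
  have N: "real N * \<kappa> \<ge> C + \<kappa>"
  proof -
    have "real N \<ge> C/\<kappa> + 1" unfolding N_def using C0 \<kappa>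
      by (simp add: of_nat_nat)
    then have "real N * \<kappa> \<ge> (C/\<kappa> + 1) * \<kappa>" using \<kappa> by (intro mult_right_mono) auto
    then show ?thesis using \<kappa> by (simp add: algebra_simps)
  qed
  have N0: "real N > 0" by (simp add: N_def)
  define T0 where "T0 = real N * 3"
  have T0: "T0 > 0" using N0 by (simp add: T0_def)
  define \<epsilon> where "\<epsilon> = \<kappa> / T0"
  have \<epsilon>: "\<epsilon> > 0" using \<kappa> T0 by (simp add: \<epsilon>_def)
  have main: "x \<bullet> (((1 / T0) *\<^sub>R integral {t..t+T0} (\<lambda>s. transpose (vdp_phi (v1 s) (v2 s)) ** transpose (transpose (vdp_phi (v1 s) (v2 s))))
      - \<epsilon> *\<^sub>R mat 1) *v x) \<ge> 0" if t: "t \<ge> 1" for t and x :: "real^3"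
  proof -
    have t0: "t \<ge> 0" using t by simp
    let ?I = "{t..t+T0}"
    let ?M = "\<lambda>s. transpose (vdp_phi (v1 s) (v2 s)) ** transpose (transpose (vdp_phi (v1 s) (v2 s)))"
    have sub: "?I \<subseteq> {0..}" using t0 by auto
    have Mint: "?M integrable_on ?I"
      by (rule integrable_continuous_interval, rule vdp_cont; rule continuous_on_subset[OF _ sub]) (use c1 c2 in auto)
    define h where "h A = x \<bullet> (A *v x)" for A :: "real^3^3"
    have hl: "bounded_linear h"
      unfolding linear_conv_bounded_linear[symmetric]
      by (rule linearI) (simp_all add: h_def matrix_vector_mult_add_rdistrib inner_add_right
          scaleR_matrix_vector_assoc[symmetric] inner_scaleR_right)
    have hint: "h (integral ?I ?M) = integral ?I (h \<circ> ?M)" by (rule integral_linear[OF Mint hl, symmetric])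
    have hM: "(h \<circ> ?M) = (\<lambda>s. (x$1)\<^sup>2 * (v2 s)\<^sup>2 + (x$3)\<^sup>2 * (w s)\<^sup>2 + (x$2)\<^sup>2 * (v1 s)\<^sup>2 - 2 * (x$2 * x$3) * (v1 s * w s))"
      unfolding comp_def h_def vdp_quad by (rule ext) (simp add: w_def power2_eq_square algebra_simps)
    have int: "g integrable_on ?I" if "continuous_on {0..} g" for g :: "real \<Rightarrow> real"
      by (rule integrable_continuous_interval, rule continuous_on_subset[OF that sub])
    have i1: "((\<lambda>s. (v1 s)\<^sup>2) has_integral integral ?I (\<lambda>s. (v1 s)\<^sup>2)) ?I"
      by (rule integrable_integral, rule int) (intro continuous_intros c1)
    have i2: "((\<lambda>s. (v2 s)\<^sup>2) has_integral integral ?I (\<lambda>s. (v2 s)\<^sup>2)) ?I"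
      by (rule integrable_integral, rule int) (intro continuous_intros c2)
    have i3: "((\<lambda>s. (w s)\<^sup>2) has_integral integral ?I (\<lambda>s. (w s)\<^sup>2)) ?I"
      by (rule integrable_integral, rule int) (intro continuous_intros cw)
    \<comment> \<open>cross term via FTC\<close>
    define Gf where "Gf p = p\<^sup>2/2 - p^4/4" for p :: real
    have i4': "((\<lambda>s. a * (v1 s * w s)) has_integral (Gf (v1 (t+T0)) - Gf (v1 t))) ?I"
    proof (rule Henstock_Kurzweil_Integration.fundamental_theorem_of_calculus)
      show "t \<le> t + T0" using T0 by simp
      fix s assume s: "s \<in> ?I"
      then have s0: "s \<ge> 0" using t0 by simp
      have "((\<lambda>s. Gf (v1 s)) has_real_derivative a * (v1 s * w s)) (at s within {0..})"
        unfolding Gf_def w_def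
        by (rule derivative_eq_intros d1[OF s0] refl | simp)+ (simp add: algebra_simps power2_eq_square power3_eq_cube)
      then have "((\<lambda>s. Gf (v1 s)) has_real_derivative a * (v1 s * w s)) (at s within ?I)"
        by (rule has_field_derivative_subset) (use sub in auto)
      then show "((\<lambda>s. Gf (v1 s)) has_vector_derivative a * (v1 s * w s)) (at s within ?I)"
        by (simp add: has_real_derivative_iff_has_vector_derivative)
    qed
    define J where "J = (Gf (v1 (t+T0)) - Gf (v1 t)) / a"
    have i4: "((\<lambda>s. v1 s * w s) has_integral J) ?I"
    proof -
      have "((\<lambda>s. (1/a) * (a * (v1 s * w s))) has_integral ((1/a) * (Gf (v1 (t+T0)) - Gf (v1 t)))) ?I"
        by (rule has_integral_mult_right[OF i4'])
      then show ?thesis using a by (simp add: J_def)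
    qed
    have Gb: "\<bar>Gf (v1 s)\<bar> \<le> B1\<^sup>2/2 + B1^4/4" if "s \<ge> 0" for s
    proof -
      have "(v1 s)^4 = ((v1 s)\<^sup>2)\<^sup>2" by simp
      also have "\<dots> \<le> (B1\<^sup>2)\<^sup>2" using sq1[OF that] by (rule power_mono) auto
      finally have "(v1 s)^4 \<le> B1^4" by simp
      moreover have "(v1 s)^4 \<ge> 0" "(v1 s)\<^sup>2 \<ge> 0" by auto
      moreover have "B1^4 \<ge> 0" "B1\<^sup>2 \<ge> 0" by auto
      ultimately show ?thesis using sq1[OF that] unfolding Gf_def abs_le_iff by (intro conjI; linarith)
    qed
    have Jb: "\<bar>J\<bar> \<le> C"
    proof -
      have "\<bar>Gf (v1 (t+T0)) - Gf (v1 t)\<bar> \<le> 2 * (B1\<^sup>2/2 + B1^4/4)"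
      proof -
        have g1: "\<bar>Gf (v1 (t+T0))\<bar> \<le> B1\<^sup>2/2 + B1^4/4" by (rule Gb) (use t0 T0 in linarith)
        have g2: "\<bar>Gf (v1 t)\<bar> \<le> B1\<^sup>2/2 + B1^4/4" by (rule Gb[OF t0])
        show ?thesis unfolding mult_2 using g1 g2 abs_triangle_ineq4[of "Gf (v1 (t+T0))" "Gf (v1 t)"] by linarith
      qed
      then show ?thesis unfolding J_def C_def using a by (simp add: abs_divide divide_right_mono)
    qed
    have all: "((h \<circ> ?M) has_integral ((x$1)\<^sup>2 * integral ?I (\<lambda>s. (v2 s)\<^sup>2) + (x$3)\<^sup>2 * integral ?I (\<lambda>s. (w s)\<^sup>2)
        + (x$2)\<^sup>2 * integral ?I (\<lambda>s. (v1 s)\<^sup>2) - 2 * (x$2 * x$3) * J)) ?I"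
      unfolding hM
      by (intro has_integral_diff has_integral_add has_integral_mult_right i1 i2 i3 i4)
    have Q: "h (integral ?I ?M) = (x$1)\<^sup>2 * integral ?I (\<lambda>s. (v2 s)\<^sup>2) + (x$3)\<^sup>2 * integral ?I (\<lambda>s. (w s)\<^sup>2)
        + (x$2)\<^sup>2 * integral ?I (\<lambda>s. (v1 s)\<^sup>2) - 2 * (x$2 * x$3) * J"
      unfolding hint using all by (rule integral_unique)
    have Il: "integral ?I g \<ge> real N * \<kappa>" if "continuous_on {0..} g" "\<And>s. s \<ge> 0 \<Longrightarrow> integral {s..s+3} g \<ge> \<kappa>" for g
      using windows[where N=N, OF that(1) that(2) _ t0] unfolding T0_def by simp
    have I1: "integral ?I (\<lambda>s. (v1 s)\<^sup>2) \<ge> real N * \<kappa>"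
      by (rule Il) (use win in \<open>auto intro!: continuous_intros c1\<close>)
    have I2: "integral ?I (\<lambda>s. (v2 s)\<^sup>2) \<ge> real N * \<kappa>"
      by (rule Il) (use win in \<open>auto intro!: continuous_intros c2\<close>)
    have I3: "integral ?I (\<lambda>s. (w s)\<^sup>2) \<ge> real N * \<kappa>"
      by (rule Il) (use win in \<open>auto simp: w_def intro!: continuous_intros c1 c2\<close>)
    let ?n = "(x$1)\<^sup>2 + (x$2)\<^sup>2 + (x$3)\<^sup>2"
    have q1: "(x$1)\<^sup>2 * integral ?I (\<lambda>s. (v2 s)\<^sup>2) \<ge> (x$1)\<^sup>2 * (real N * \<kappa>)" using I2 by (intro mult_left_mono) auto
    have q2: "(x$3)\<^sup>2 * integral ?I (\<lambda>s. (w s)\<^sup>2) \<ge> (x$3)\<^sup>2 * (real N * \<kappa>)" using I3 by (intro mult_left_mono) auto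
    have q3: "(x$2)\<^sup>2 * integral ?I (\<lambda>s. (v1 s)\<^sup>2) \<ge> (x$2)\<^sup>2 * (real N * \<kappa>)" using I1 by (intro mult_left_mono) auto
    have q4: "\<bar>2 * (x$2 * x$3) * J\<bar> \<le> ((x$2)\<^sup>2 + (x$3)\<^sup>2) * C"
    proof -
      have "2 * \<bar>x$2 * x$3\<bar> \<le> (x$2)\<^sup>2 + (x$3)\<^sup>2"
      proof -
        have "0 \<le> (\<bar>x$2\<bar> - \<bar>x$3\<bar>)\<^sup>2" by simp
        moreover have "(\<bar>x$2\<bar> - \<bar>x$3\<bar>)\<^sup>2 = (x$2)\<^sup>2 + (x$3)\<^sup>2 - 2 * \<bar>x$2 * x$3\<bar>"
          by (simp add: power2_eq_square abs_mult algebra_simps abs_mult_self_eq)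
        ultimately show ?thesis by linarith
      qed
      moreover have "\<bar>2 * (x$2 * x$3) * J\<bar> = (2 * \<bar>x$2 * x$3\<bar>) * \<bar>J\<bar>" by (simp add: abs_mult)
      moreover have "(2 * \<bar>x$2 * x$3\<bar>) * \<bar>J\<bar> \<le> ((x$2)\<^sup>2 + (x$3)\<^sup>2) * C"
        by (rule mult_mono) (use calculation(1) Jb C0 in auto)
      ultimately show ?thesis by simp
    qed
    have "h (integral ?I ?M) \<ge> ?n * (real N * \<kappa>) - ((x$2)\<^sup>2 + (x$3)\<^sup>2) * C"
      unfolding Q using q1 q2 q3 q4 by (simp add: algebra_simps)
    moreover have "((x$2)\<^sup>2 + (x$3)\<^sup>2) * C \<le> ?n * C" using C0 by (intro mult_right_mono) auto
    ultimately have "h (integral ?I ?M) \<ge> ?n * (real N * \<kappa> - C)" by (simp add: algebra_simps)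
    moreover have "?n * (real N * \<kappa> - C) \<ge> ?n * \<kappa>" using N by (intro mult_left_mono) auto
    ultimately have hge: "h (integral ?I ?M) \<ge> ?n * \<kappa>" by linarith
    have xx: "x \<bullet> x = ?n" by (simp add: inner_vec_def sum_3 power2_eq_square)
    have "x \<bullet> (((1 / T0) *\<^sub>R integral ?I ?M - \<epsilon> *\<^sub>R mat 1) *v x)
        = (1/T0) * h (integral ?I ?M) - \<epsilon> * (x \<bullet> x)"
      by (simp add: h_def matrix_vector_mult_diff_rdistrib scaleR_matrix_vector_assoc[symmetric]
          inner_diff_right inner_scaleR_right)
    also have "\<dots> \<ge> (1/T0) * (?n * \<kappa>) - \<epsilon> * ?n" unfolding xx using hge T0 by (simp add: divide_right_mono)
    also have "(1/T0) * (?n * \<kappa>) - \<epsilon> * ?n = 0" by (simp add: \<epsilon>_def)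
    finally show ?thesis by simp
  qed
  show ?thesis unfolding persistently_exciting_def
    apply (intro conjI bnd pc)
    apply (rule exI[of _ \<epsilon>], rule exI[of _ 1], rule exI[of _ T0])
    using main \<epsilon> T0 by auto
qed

theorem mainTheorem4:
  fixes a b c :: real and v1 v2 :: "real \<Rightarrow> real"
  assumes "a > 0" "b > 0" "c > 0"
    and "\<And>t. t \<ge> 0 \<Longrightarrow> (v1 has_real_derivative a * v2 t) (at t within {0..})"
    and "\<And>t. t \<ge> 0 \<Longrightarrow> (v2 has_real_derivative (- b * v1 t + c * (1 - (v1 t)\<^sup>2) * v2 t)) (at t within {0..})"
    and "(v1 0, v2 0) \<noteq> (0, 0)"
  shows "persistently_exciting (\<lambda>t. transpose (vdp_phi (v1 t) (v2 t)))"
proof -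
  obtain B1 B2 where bnd: "\<forall>t\<ge>0. \<bar>v1 t\<bar> \<le> B1 \<and> \<bar>v2 t\<bar> \<le> B2"
    using traj_bounds[OF assms(1-5)] by blast
  obtain \<rho> where rho: "\<rho> > 0" "\<forall>t\<ge>0. b*(v1 t)\<^sup>2 + a*(v2 t)\<^sup>2 \<ge> \<rho>"
    using traj_low[OF assms] by blast
  have bv1: "\<And>t. t \<ge> 0 \<Longrightarrow> \<bar>v1 t\<bar> \<le> B1" and bv2: "\<And>t. t \<ge> 0 \<Longrightarrow> \<bar>v2 t\<bar> \<le> B2"
    using bnd by auto
  have low: "\<And>t. t \<ge> 0 \<Longrightarrow> b * (v1 t)\<^sup>2 + a * (v2 t)\<^sup>2 \<ge> \<rho>" using rho(2) by auto
  obtain \<kappa> where \<kappa>: "\<kappa> > 0" and win: "\<forall>s\<ge>0. integral {s..s+3} (\<lambda>\<tau>. (v1 \<tau>)\<^sup>2) \<ge> \<kappa> \<and> integral {s..s+3} (\<lambda>\<tau>. (v2 \<tau>)\<^sup>2) \<ge> \<kappa>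
     \<and> integral {s..s+3} (\<lambda>\<tau>. ((1 - (v1 \<tau>)\<^sup>2) * v2 \<tau>)\<^sup>2) \<ge> \<kappa>"
    using pe_windows[OF assms(1-5) bv1 bv2 low rho(1)] by blast
  show ?thesis
    by (rule pe_final[OF assms(1) assms(4) cont0[OF assms(4)] cont0[OF assms(5)] bv1 bv2 \<kappa> win])
qed

end
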